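(* Let $T$, $\mathcal{S}=\mathcal{S}_+\cup\mathcal{S}_-$, $\lambda,\mu$, $P_\lambda,P_\mu$ be as in the context, and let $\{(Y_n,\kappa_n)\}_{n\ge0}$ be the discrete-time QBD with transition blocks $$C'_{-1}=\frac12\begin{bmatrix}0&P_{\mu+-}\\0&P_{\mu--}\end{bmatrix},\quad C'_0=\frac12\begin{bmatrix}P_{\mu++}&P_{\lambda+-}\\P_{\mu-+}&P_{\lambda--}\end{bmatrix},\quad C'_1=\frac12\begin{bmatrix}P_{\lambda++}&0\\P_{\lambda-+}&0\end{bmatrix},$$ started from $Y_0=1$, $\kappa_0\in\mathcal{S}_+$. Define $\tau_0:=0$ and $\tau_{k+1}:=\min\{n>\tau_k: Y_n\neq Y_{\tau_k}\}$, and set $M_{\tau_k}:=Y_{\tau_k}-1/2$ if $\kappa_{\tau_k}\in\mathcal{S}_+$ and $M_{\tau_k}:=Y_{\tau_k}+1/2$ if $\kappa_{\tau_k}\in\mathcal{S}_-$. Then $\{(M_{\tau_k},\kappa_{\tau_k})\}_{k\in\mathbb{N}}$ is a quasi-birth-death process on $(\mathbb{Z}+1/2)\times\mathcal{S}$ with transition blocks $$D_{-1}=\begin{bmatrix}0&0\\0&F\end{bmatrix},\quad D_0=\begin{bmatrix}0&G\\H&0\end{bmatrix},\quad D_1=\begin{bmatrix}E&0\\0&0\end{bmatrix},$$ where $E\in\mathbb{R}^{|\mathcal{S}_+|\times|\mathcal{S}_+|}$, $F\in\mathbb{R}^{|\mathcal{S}_-|\times|\mathcal{S}_-|}$, $G\in\mathbb{R}^{|\mathcal{S}_+|\times|\mathcal{S}_-|}$,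 $H\in\mathbb{R}^{|\mathcal{S}_-|\times|\mathcal{S}_+|}$ are given by $$\begin{bmatrix}E&G\\H&F\end{bmatrix}=\Big(I-\tfrac12\begin{bmatrix}P_{\mu++}&P_{\lambda+-}\\P_{\mu-+}&P_{\lambda--}\end{bmatrix}\Big)^{-1}\tfrac12\begin{bmatrix}P_{\lambda++}&P_{\mu+-}\\P_{\lambda-+}&P_{\mu--}\end{bmatrix} =\begin{bmatrix}I-\mu^{-1}T_{++}&-\lambda^{-1}T_{+-}\\-\mu^{-1}T_{-+}&I-\lambda^{-1}T_{--}\end{bmatrix}^{-1}\begin{bmatrix}I+\lambda^{-1}T_{++}&\mu^{-1}T_{+-}\\\lambda^{-1}T_{-+}&I+\mu^{-1}T_{--}\end{bmatrix}.$$
   Context: $T$ is the generator of a continuous-time Markov chain on a finite set $\mathcal{S}=\mathcal{S}_+\cup\mathcal{S}_-$ (disjoint, both nonempty), partitioned into blocks $T_{++},T_{+-},T_{-+},T_{--}$ according to $\mathcal{S}_\pm$. $\lambda,\mu>0$ satisfy $\lambda,\mu\ge\max_i|T_{ii}|$; $P_\lambda:=I+\lambda^{-1}T$, $P_\mu:=I+\mu^{-1}T$ with blocks $P_{\lambda++}$ etc. A discrete-time quasi-birth-death process (QBD) with transition blocks $L_{-1},L_0,L_1$ is a Markov chain $\{(Y_n,\kappa_n)\}$ on $\mathbb{Z}\times\mathcal{S}$ with $\mathbb{P}[Y_n=k+d,\kappa_n=j\mid Y_{n-1}=k,\kappa_{n-1}=i]=(L_d)_{ij}$ for $d\in\{-1,0,1\}$;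 for a QBD on $(\mathbb{Z}+1/2)\times\mathcal{S}$ the levels are shifted by $1/2$ in the same way. Matrices are partitioned into blocks according to $\mathcal{S}_+,\mathcal{S}_-$. *)

theory Defs
  imports "HOL-Probability.Probability"
begin

definition generator :: "real^'s::finite^'s \<Rightarrow> bool" where
  "generator T \<longleftrightarrow> (\<forall>i j. i \<noteq> j \<longrightarrow> T$i$j \<ge> 0) \<and> (\<forall>i. (\<Sum>j\<in>UNIV. T$i$j) = 0)"

definition Pmat :: "real^'s::finite^'s \<Rightarrow> real \<Rightarrow> real^'s^'s" where
  "Pmat T c = mat 1 + (1 / c) *\<^sub>R T"

definition qbd_step :: "real^'s::finite^'s \<Rightarrow> real^'s^'s \<Rightarrow> real^'s^'s
      \<Rightarrow> ('l::ring_1 \<times> 's) \<Rightarrow> ('l \<times> 's) \<Rightarrow> real" where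
  "qbd_step Lm L0 Lp x y =
     (if fst y = fst x - 1 then Lm $ snd x $ snd y
      else if fst y = fst x then L0 $ snd x $ snd y
      else if fst y = fst x + 1 then Lp $ snd x $ snd y
      else 0)"

(* X is a (time-homogeneous) discrete-time QBD with blocks Lm, L0, Lp on the probability
   space M: each X n is a random variable, and
   P[X_0..X_{n+1} = x_0..x_{n+1}] = P[X_0..X_n = x_0..x_n] * (transition prob x_n -> x_{n+1}),
   i.e. P[X_{n+1} = y | X_0,...,X_n] is given by the blocks. *)
definition is_QBD :: "'w measure \<Rightarrow> (nat \<Rightarrow> 'w \<Rightarrow> ('l::ring_1 \<times> 's::finite))
      \<Rightarrow> real^'s^'s \<Rightarrow> real^'s^'s \<Rightarrow> real^'s^'s \<Rightarrow> bool" where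
  "is_QBD M X Lm L0 Lp \<longleftrightarrow>
     (\<forall>n. X n \<in> measurable M (count_space UNIV)) \<and>
     (\<forall>n (xs :: nat \<Rightarrow> 'l \<times> 's).
        measure M {\<omega> \<in> space M. \<forall>i\<le>Suc n. X i \<omega> = xs i}
        = measure M {\<omega> \<in> space M. \<forall>i\<le>n. X i \<omega> = xs i} * qbd_step Lm L0 Lp (xs n) (xs (Suc n)))"

(* The blocks C'_{-1}, C'_0, C'_1 (Sp = S_+, its complement = S_-). *)
definition Cm :: "real^'s::finite^'s \<Rightarrow> 's set \<Rightarrow> real \<Rightarrow> real \<Rightarrow> real^'s^'s" where
  "Cm T Sp lam mu = (\<chi> i j. if j \<in> Sp then 0 else Pmat T mu $ i $ j / 2)"

definition C0 :: "real^'s::finite^'s \<Rightarrow> 's set \<Rightarrow> real \<Rightarrow> real \<Rightarrow> real^'s^'s" where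
  "C0 T Sp lam mu = (\<chi> i j. if j \<in> Sp then Pmat T mu $ i $ j / 2 else Pmat T lam $ i $ j / 2)"

definition Cp :: "real^'s::finite^'s \<Rightarrow> 's set \<Rightarrow> real \<Rightarrow> real \<Rightarrow> real^'s^'s" where
  "Cp T Sp lam mu = (\<chi> i j. if j \<in> Sp then Pmat T lam $ i $ j / 2 else 0)"

definition Amat :: "real^'s::finite^'s \<Rightarrow> 's set \<Rightarrow> real \<Rightarrow> real \<Rightarrow> real^'s^'s" where
  "Amat T Sp lam mu = (\<chi> i j. if j \<in> Sp then Pmat T mu $ i $ j else Pmat T lam $ i $ j)"

definition Bmat :: "real^'s::finite^'s \<Rightarrow> 's set \<Rightarrow> real \<Rightarrow> real \<Rightarrow> real^'s^'s" where
  "Bmat T Sp lam mu = (\<chi> i j. if j \<in> Sp then Pmat T lam $ i $ j else Pmat T mu $ i $ j)"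

definition Kmat :: "real^'s::finite^'s \<Rightarrow> 's set \<Rightarrow> real \<Rightarrow> real \<Rightarrow> real^'s^'s" where
  "Kmat T Sp lam mu =
     matrix_inv (mat 1 - (1/2) *\<^sub>R Amat T Sp lam mu) ** ((1/2) *\<^sub>R Bmat T Sp lam mu)"

definition Xmat :: "real^'s::finite^'s \<Rightarrow> 's set \<Rightarrow> real \<Rightarrow> real \<Rightarrow> real^'s^'s" where
  "Xmat T Sp lam mu = mat 1 - (\<chi> i j. if j \<in> Sp then T$i$j / mu else T$i$j / lam)"

definition Ymat :: "real^'s::finite^'s \<Rightarrow> 's set \<Rightarrow> real \<Rightarrow> real \<Rightarrow> real^'s^'s" where
  "Ymat T Sp lam mu = mat 1 + (\<chi> i j. if j \<in> Sp then T$i$j / lam else T$i$j / mu)"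

definition Dm :: "real^'s::finite^'s \<Rightarrow> 's set \<Rightarrow> real^'s^'s" where
  "Dm K Sp = (\<chi> i j. if i \<notin> Sp \<and> j \<notin> Sp then K$i$j else 0)"

definition D0 :: "real^'s::finite^'s \<Rightarrow> 's set \<Rightarrow> real^'s^'s" where
  "D0 K Sp = (\<chi> i j. if (i \<in> Sp) \<noteq> (j \<in> Sp) then K$i$j else 0)"

definition Dp :: "real^'s::finite^'s \<Rightarrow> 's set \<Rightarrow> real^'s^'s" where
  "Dp K Sp = (\<chi> i j. if i \<in> Sp \<and> j \<in> Sp then K$i$j else 0)"

fun tau :: "(nat \<Rightarrow> int) \<Rightarrow> nat \<Rightarrow> nat" where
  "tau y 0 = 0"
| "tau y (Suc k) = (LEAST n. tau y k < n \<and> y n \<noteq> y (tau y k))"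

(* (M_{tau_k}, kappa_{tau_k}) with levels in Z + 1/2 represented as reals *)
definition embedded :: "(nat \<Rightarrow> 'w \<Rightarrow> int) \<Rightarrow> (nat \<Rightarrow> 'w \<Rightarrow> 's) \<Rightarrow> 's set
      \<Rightarrow> nat \<Rightarrow> 'w \<Rightarrow> real \<times> 's" where
  "embedded Y \<kappa> Sp k \<omega> =
     (let t = tau (\<lambda>n. Y n \<omega>) k in
       (if \<kappa> t \<omega> \<in> Sp then of_int (Y t \<omega>) - 1/2 else of_int (Y t \<omega>) + 1/2, \<kappa> t \<omega>))"

end

theory Submission
  imports Defs
begin

fun mpow :: "real^'s::finite^'s \<Rightarrow> nat \<Rightarrow> real^'s^'s" where
  "mpow A 0 = mat 1"
| "mpow A (Suc n) = mpow A n ** A"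

lemma mpow_comm: "mpow A n ** A = A ** mpow A n"
proof (induction n)
  case 0 then show ?case by (simp add: matrix_mul_lid matrix_mul_rid)
next
  case (Suc n) then show ?case by (metis matrix_mul_assoc mpow.simps(2))
qed

lemma mpow_Suc_left: "mpow A (Suc n) = A ** mpow A n"
  using mpow_comm by simp

lemma mpow_nonneg:
  assumes "\<forall>i j. A$i$j \<ge> 0" shows "mpow A n $i$j \<ge> 0"
proof (induction n arbitrary: i j)
  case 0 then show ?case by (simp add: mat_def)
next
  case (Suc n) then show ?case using assms
    by (simp add: matrix_matrix_mult_def sum_nonneg)
qed

lemma rowsum_mult: "(\<Sum>j\<in>UNIV. (P ** (A::real^'s::finite^'s)) $ i $ j) = (\<Sum>k\<in>UNIV. P $i$k * (\<Sum>j\<in>UNIV. A$k$j))"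
proof -
  have "(\<Sum>j\<in>UNIV. (P ** A) $ i $ j) = (\<Sum>j\<in>UNIV. \<Sum>k\<in>UNIV. P $i$k * A$k$j)"
    by (simp add: matrix_matrix_mult_def)
  also have "\<dots> = (\<Sum>k\<in>UNIV. \<Sum>j\<in>UNIV. P $i$k * A$k$j)" by (rule sum.swap)
  also have "\<dots> = (\<Sum>k\<in>UNIV. P $i$k * (\<Sum>j\<in>UNIV. A$k$j))" by (simp add: sum_distrib_left)
  finally show ?thesis .
qed

lemma mpow_rowsum:
  assumes "\<forall>i j. A$i$j \<ge> 0" "\<forall>i. (\<Sum>j\<in>UNIV. A$i$j) \<le> r" "r \<ge> 0"
  shows "(\<Sum>j\<in>UNIV. mpow A n $i$j) \<le> r ^ n"
proof (induction n arbitrary: i)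
  case 0 then show ?case by (simp add: mat_def)
next
  case (Suc n)
  have "(\<Sum>j\<in>UNIV. mpow A (Suc n) $i$j) = (\<Sum>k\<in>UNIV. mpow A n $i$k * (\<Sum>j\<in>UNIV. A$k$j))"
    by (simp only: mpow.simps rowsum_mult)
  also have "\<dots> \<le> (\<Sum>k\<in>UNIV. mpow A n $i$k * r)"
    by (intro sum_mono mult_left_mono) (use assms mpow_nonneg[OF assms(1)] in auto)
  also have "\<dots> = (\<Sum>k\<in>UNIV. mpow A n $i$k) * r" by (simp add: sum_distrib_right)
  also have "\<dots> \<le> r^n * r" using Suc assms(3) by (intro mult_right_mono) auto
  finally show ?case by (simp add: mult.commute)
qed

lemma mpow_entry_le:
  assumes "\<forall>i j. A$i$j \<ge> 0" "\<forall>i. (\<Sum>j\<in>UNIV. A$i$j) \<le> r" "r \<ge> 0"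
  shows "mpow A n $i$j \<le> r ^ n"
proof -
  have "mpow A n $i$j \<le> (\<Sum>j\<in>UNIV. mpow A n $i$j)"
    by (rule member_le_sum) (use mpow_nonneg[OF assms(1)] in auto)
  then show ?thesis using mpow_rowsum[OF assms] by (meson order.trans)
qed

lemma mpow_summable:
  assumes "\<forall>i j. A$i$j \<ge> 0" "\<forall>i. (\<Sum>j\<in>UNIV. A$i$j) \<le> r" "r \<ge> 0" "r < 1"
  shows "summable (\<lambda>n. mpow A n $i$j)"
proof (rule summable_comparison_test'[where g="\<lambda>n. r^n"])
  show "summable (\<lambda>n. r^n)" using assms by (simp add: summable_geometric)
  show "norm (mpow A n $i$j) \<le> r^n" for n
    using mpow_nonneg[OF assms(1)] mpow_entry_le[OF assms(1-3)] by simp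
qed

lemma matrix_diff_rdistrib: "((B::real^'n::finite^'m) - A) ** N = B ** N - A ** N"
  by (simp add: vec_eq_iff matrix_matrix_mult_def sum_subtractf left_diff_distrib)

definition nsum :: "real^'s::finite^'s \<Rightarrow> real^'s^'s" where
  "nsum A = (\<chi> i j. \<Sum>n. mpow A n $i$j)"

lemma neumann:
  assumes "\<forall>i j. A$i$j \<ge> 0" "\<forall>i. (\<Sum>j\<in>UNIV. A$i$j) \<le> r" "r \<ge> 0" "r < 1"
  shows "(mat 1 - A) ** nsum A = mat 1"
proof -
  note sm = mpow_summable[OF assms]
  have "((mat 1 - A) ** nsum A) $i$j = mat 1 $i$j" for i j
  proof -
    have "(A ** nsum A) $i$j = (\<Sum>k\<in>UNIV. A$i$k * (\<Sum>n. mpow A n $k$j))"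
      by (simp add: matrix_matrix_mult_def nsum_def)
    also have "\<dots> = (\<Sum>k\<in>UNIV. (\<Sum>n. A$i$k * mpow A n $k$j))"
      by (simp add: suminf_mult sm)
    also have "\<dots> = (\<Sum>n. \<Sum>k\<in>UNIV. A$i$k * mpow A n $k$j)"
      by (rule suminf_sum[symmetric]) (simp add: sm summable_mult)
    also have "\<dots> = (\<Sum>n. mpow A (Suc n) $i$j)"
      by (simp only: mpow_Suc_left) (simp add: matrix_matrix_mult_def)
    finally have 1: "(A ** nsum A) $i$j = (\<Sum>n. mpow A (Suc n) $i$j)" .
    have "(\<Sum>n. mpow A n $i$j) = (\<Sum>n. mpow A (Suc n) $i$j) + mpow A 0 $i$j"
      using suminf_split_head[OF sm[of i j]] by simp
    then show ?thesis using 1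
      by (simp add: matrix_diff_rdistrib matrix_mul_lid nsum_def)
  qed
  then show ?thesis by (simp add: vec_eq_iff)
qed

lemma Pmat_entry: "Pmat T c $i$j = (if i = j then 1 else 0) + T$i$j / c"
  by (simp add: Pmat_def mat_def)

lemma gen_diag_le0: assumes "generator T" shows "T$i$i \<le> 0"
proof -
  have "(\<Sum>j\<in>UNIV. T$i$j) = T$i$i + (\<Sum>j\<in>UNIV-{i}. T$i$j)"
    by (simp add: sum.remove)
  moreover have "(\<Sum>j\<in>UNIV-{i}. T$i$j) \<ge> 0"
    using assms by (intro sum_nonneg) (auto simp: generator_def)
  ultimately show ?thesis using assms by (simp add: generator_def)
qed

lemma Pmat_nonneg:
  assumes "generator T" "c > 0" "\<bar>T$i$i\<bar> \<le> c"
  shows "Pmat T c $i$j \<ge> 0"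
proof (cases "i = j")
  case True
  then show ?thesis using assms gen_diag_le0[OF assms(1), of i]
    by (simp add: Pmat_entry field_simps)
next
  case False
  then show ?thesis using assms by (simp add: Pmat_entry generator_def)
qed

lemma Pmat_rowsum:
  assumes "generator T" "c > 0"
  shows "(\<Sum>j\<in>UNIV. Pmat T c $i$j) = 1"
proof -
  have "(\<Sum>j\<in>UNIV. Pmat T c $i$j) = (\<Sum>j\<in>UNIV. (if i = j then 1 else 0)) + (\<Sum>j\<in>UNIV. T$i$j) / c"
    by (simp add: Pmat_entry sum.distrib sum_divide_distrib)
  then show ?thesis using assms by (simp add: generator_def)
qed

lemma C0_entry: "C0 T Sp lam mu $i$j = (if j \<in> Sp then Pmat T mu $i$j else Pmat T lam $i$j) / 2"
  by (simp add: C0_def)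

lemma C0_nonneg:
  assumes "generator T" "lam > 0" "mu > 0" "\<forall>i. \<bar>T$i$i\<bar> \<le> lam" "\<forall>i. \<bar>T$i$i\<bar> \<le> mu"
  shows "C0 T Sp lam mu $i$j \<ge> 0"
  using Pmat_nonneg[OF assms(1,2)] Pmat_nonneg[OF assms(1,3)] assms(4,5)
  by (simp add: C0_entry)

lemma C0_rowsum_lt:
  assumes "generator T" "lam > 0" "mu > 0" "\<forall>i. \<bar>T$i$i\<bar> \<le> lam" "\<forall>i. \<bar>T$i$i\<bar> \<le> mu"
  shows "(\<Sum>j\<in>UNIV. C0 T Sp lam mu $i$j) < 1"
proof -
  define q where "q = (\<Sum>j\<in>UNIV. (if j \<in> Sp then Pmat T lam $i$j else Pmat T mu $i$j))"
  have nn: "Pmat T c $i$j \<ge> 0" if "c = lam \<or> c = mu" for c j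
    using that Pmat_nonneg[OF assms(1)] assms by auto
  have "(\<Sum>j\<in>UNIV. 2 * C0 T Sp lam mu $i$j) + q = (\<Sum>j\<in>UNIV. Pmat T mu $i$j) + (\<Sum>j\<in>UNIV. Pmat T lam $i$j)"
    unfolding q_def sum.distrib[symmetric] by (intro sum.cong) (auto simp: C0_entry)
  also have "\<dots> = 2" using Pmat_rowsum[OF assms(1) assms(3), of i] Pmat_rowsum[OF assms(1,2), of i] by simp
  finally have eq: "2 * (\<Sum>j\<in>UNIV. C0 T Sp lam mu $i$j) + q = 2" by (simp add: sum_distrib_left)
  have "q > 0"
  proof (rule ccontr)
    assume "\<not> q > 0"
    moreover have "q \<ge> 0" unfolding q_def by (intro sum_nonneg) (auto intro: nn)
    ultimately have "q = 0" by simp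
    then have z: "(if j \<in> Sp then Pmat T lam $i$j else Pmat T mu $i$j) = 0" for j
      unfolding q_def using sum_nonneg_eq_0_iff[of UNIV "\<lambda>j. (if j \<in> Sp then Pmat T lam $i$j else Pmat T mu $i$j)"]
      nn by auto
    have off: "T$i$j = 0" if "j \<noteq> i" for j
      using z[of j] that assms by (auto simp: Pmat_entry split: if_splits)
    have "(\<Sum>j\<in>UNIV. T$i$j) = (\<Sum>j\<in>UNIV. if j = i then T$i$i else 0)"
      by (intro sum.cong) (auto simp: off)
    then have "T$i$i = 0" using assms(1) by (simp add: generator_def)
    then show False using z[of i] assms by (auto simp: Pmat_entry split: if_splits)
  qed
  then show ?thesis using eq by linarith
qed

lemma scaleR_mm_left: "(c *\<^sub>R (A::real^'n::finite^'m)) ** B = c *\<^sub>R (A ** B)"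
  by (simp add: vec_eq_iff matrix_matrix_mult_def sum_distrib_left mult.assoc)
lemma scaleR_mm_right: "(A::real^'n::finite^'m) ** (c *\<^sub>R B) = c *\<^sub>R (A ** B)"
  by (simp add: vec_eq_iff matrix_matrix_mult_def sum_distrib_left mult.left_commute)

lemma matrix_inv_eq:
  fixes A B :: "real^'n::finite^'n"
  assumes "A ** B = mat 1"
  shows "matrix_inv A = B" "invertible A"
proof -
  have BA: "B ** A = mat 1" using assms matrix_left_right_inverse by blast
  show inv: "invertible A" unfolding invertible_def using assms BA by blast
  have "\<exists>A'. A ** A' = mat 1 \<and> A' ** A = mat 1" using assms BA by blast
  then have "A ** matrix_inv A = mat 1 \<and> matrix_inv A ** A = mat 1"
    unfolding matrix_inv_def by (rule someI_ex)
  then have "matrix_inv A = (matrix_inv A ** A) ** B"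
    using assms by (metis matrix_mul_assoc matrix_mul_rid)
  then show "matrix_inv A = B" using \<open>_ \<and> _\<close> by (simp add: matrix_mul_lid)
qed

locale gen_setup =
  fixes T :: "real^'s::finite^'s" and Sp :: "'s set" and lam mu :: real
  assumes gen: "generator T" and lam: "lam > 0" and mu: "mu > 0"
    and dl: "\<forall>i. \<bar>T$i$i\<bar> \<le> lam" and dm: "\<forall>i. \<bar>T$i$i\<bar> \<le> mu"
begin

abbreviation "A2 \<equiv> C0 T Sp lam mu"

definition "rr = Max (range (\<lambda>i. \<Sum>j\<in>UNIV. A2$i$j))"

lemma A2_nonneg: "\<forall>i j. A2$i$j \<ge> 0"
  using C0_nonneg[OF gen lam mu dl dm] by blast

lemma rr_ge: "\<forall>i. (\<Sum>j\<in>UNIV. A2$i$j) \<le> rr"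
  unfolding rr_def by auto

lemma rr_lt: "rr < 1"
proof -
  have "rr \<in> range (\<lambda>i. \<Sum>j\<in>UNIV. A2$i$j)" unfolding rr_def by (intro Max_in) auto
  then show ?thesis using C0_rowsum_lt[OF gen lam mu dl dm] by auto
qed

lemma rr_nonneg: "rr \<ge> 0"
  using rr_ge A2_nonneg by (meson order.trans sum_nonneg)

lemma neumann_A2: "(mat 1 - A2) ** nsum A2 = mat 1"
  by (rule neumann[OF A2_nonneg rr_ge rr_nonneg rr_lt])

lemma A2_eq: "A2 = (1/2) *\<^sub>R Amat T Sp lam mu"
  by (simp add: vec_eq_iff C0_def Amat_def)

lemma X_eq: "Xmat T Sp lam mu = 2 *\<^sub>R (mat 1 - A2)"
  by (simp add: vec_eq_iff C0_def Xmat_def Pmat_entry mat_def field_simps)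

lemma Y_eq: "Ymat T Sp lam mu = Bmat T Sp lam mu"
  by (simp add: vec_eq_iff Ymat_def Bmat_def Pmat_entry mat_def field_simps)

lemma algebra_part:
  "invertible (mat 1 - (1/2) *\<^sub>R Amat T Sp lam mu)
    \<and> invertible (Xmat T Sp lam mu)
    \<and> Kmat T Sp lam mu = matrix_inv (Xmat T Sp lam mu) ** Ymat T Sp lam mu"
proof -
  have X: "Xmat T Sp lam mu ** ((1/2) *\<^sub>R nsum A2) = mat 1"
    by (simp add: X_eq scaleR_mm_left scaleR_mm_right neumann_A2)
  show ?thesis
    using matrix_inv_eq[OF neumann_A2] matrix_inv_eq[OF X]
    by (simp add: Kmat_def A2_eq[symmetric] Y_eq scaleR_mm_left scaleR_mm_right)
qed

lemma Kmat_eq: "Kmat T Sp lam mu = nsum A2 ** ((1/2) *\<^sub>R Bmat T Sp lam mu)"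
  using matrix_inv_eq[OF neumann_A2] by (simp add: Kmat_def A2_eq[symmetric])

end

lemma map_upt_eq_iff: "map f [0..<n] = zs \<longleftrightarrow> length zs = n \<and> (\<forall>i<n. f i = zs ! i)"
  by (auto simp: list_eq_iff_nth_eq)

locale qbd = prob_space M for M :: "'w measure" +
  fixes X :: "nat \<Rightarrow> 'w \<Rightarrow> int \<times> 's::finite" and Lm L0 Lp :: "real^'s^'s"
  assumes qbd: "is_QBD M X Lm L0 Lp"
begin

abbreviation "step \<equiv> qbd_step Lm L0 Lp"

definition pre :: "nat \<Rightarrow> 'w \<Rightarrow> (int \<times> 's) list" where
  "pre t \<omega> = map (\<lambda>i. X i \<omega>) [0..<Suc t]"

lemma X_meas[measurable]: "X n \<in> measurable M (count_space UNIV)"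
  using qbd by (simp add: is_QBD_def)

lemma pre_Suc: "pre (Suc t) \<omega> = pre t \<omega> @ [X (Suc t) \<omega>]"
  by (simp add: pre_def)

lemma pre_meas[measurable]: "pre t \<in> measurable M (count_space UNIV)"
proof (induction t)
  case 0
  have "pre 0 = (\<lambda>\<omega>. [X 0 \<omega>])" by (simp add: pre_def fun_eq_iff)
  then show ?case by simp
next
  case (Suc t)
  have "(\<lambda>\<omega>. (\<lambda>xs \<omega>. xs @ [X (Suc t) \<omega>]) (pre t \<omega>) \<omega>) \<in> measurable M (count_space UNIV)"
    by (rule measurable_compose_countable[OF _ Suc]) simp
  then show ?case by (simp add: pre_Suc[abs_def])
qed

lemma length_pre[simp]: "length (pre t \<omega>) = Suc t"
  by (simp add: pre_def)

lemma pre_nth: "i \<le> t \<Longrightarrow> pre t \<omega> ! i = X i \<omega>"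
  unfolding pre_def by (subst nth_map_upt) auto

lemma last_pre: "last (pre t \<omega>) = X t \<omega>"
  by (simp add: pre_def last_map)

lemma take_pre: "t \<le> t' \<Longrightarrow> take (Suc t) (pre t' \<omega>) = pre t \<omega>"
  by (simp add: list_eq_iff_nth_eq pre_nth)

lemma cyl:
  assumes "length xs = Suc t"
  shows "measure M {\<omega>\<in>space M. pre (Suc t) \<omega> = xs @ [y]}
       = measure M {\<omega>\<in>space M. pre t \<omega> = xs} * step (last xs) y"
proof -
  define zs where "zs = (\<lambda>i. (xs @ [y]) ! i)"
  have e1: "{\<omega>\<in>space M. pre (Suc t) \<omega> = xs @ [y]} = {\<omega>\<in>space M. \<forall>i\<le>Suc t. X i \<omega> = zs i}"
    using assms unfolding pre_def map_upt_eq_iff zs_def less_Suc_eq_le by simp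
  have e2: "{\<omega>\<in>space M. pre t \<omega> = xs} = {\<omega>\<in>space M. \<forall>i\<le>t. X i \<omega> = zs i}"
    using assms unfolding pre_def map_upt_eq_iff zs_def less_Suc_eq_le
    by (intro Collect_cong) (auto simp: nth_append)
  have "last xs = xs ! t" using assms by (cases xs rule: rev_cases) auto
  then have "zs t = last xs" "zs (Suc t) = y" using assms
    by (auto simp: zs_def nth_append)
  moreover have "measure M {\<omega>\<in>space M. \<forall>i\<le>Suc t. X i \<omega> = zs i}
      = measure M {\<omega>\<in>space M. \<forall>i\<le>t. X i \<omega> = zs i} * step (zs t) (zs (Suc t))"
    using qbd unfolding is_QBD_def by blast
  ultimately show ?thesis unfolding e1 e2 by simp
qed

lemma ML0:
  assumes hS: "\<forall>xs\<in>S. length xs = Suc t \<longrightarrow> last xs = x"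
  shows "measure M {\<omega>\<in>space M. pre t \<omega> \<in> S \<and> X (Suc t) \<omega> = y}
       = measure M {\<omega>\<in>space M. pre t \<omega> \<in> S} * step x y"
proof -
  define A where "A n = {\<omega>\<in>space M. pre t \<omega> \<in> S \<and> to_nat (pre t \<omega>) = n}" for n
  define B where "B n = {\<omega>\<in>space M. (pre t \<omega> \<in> S \<and> to_nat (pre t \<omega>) = n) \<and> X (Suc t) \<omega> = y}" for n
  have "A n \<in> sets M" for n unfolding A_def by measurable
  moreover have "disjoint_family A" unfolding A_def disjoint_family_on_def by auto
  ultimately have Am: "range A \<subseteq> sets M" "disjoint_family A" by auto
  have "B n \<in> sets M" for n unfolding B_def by measurable
  moreover have "disjoint_family B" unfolding B_def disjoint_family_on_def by auto
  ultimately have Bm: "range B \<subseteq> sets M" "disjoint_family B" by auto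
  have UA: "(\<Union>n. A n) = {\<omega>\<in>space M. pre t \<omega> \<in> S}" unfolding A_def by auto
  have UB: "(\<Union>n. B n) = {\<omega>\<in>space M. pre t \<omega> \<in> S \<and> X (Suc t) \<omega> = y}" unfolding B_def by auto
  have eq: "measure M (B n) = measure M (A n) * step x y" for n
  proof (cases "n \<in> range (to_nat :: (int \<times> 's) list \<Rightarrow> nat)")
    case True
    then obtain xs :: "(int \<times> 's) list" where n: "n = to_nat xs" by auto
    show ?thesis
    proof (cases "xs \<in> S \<and> length xs = Suc t")
      case True
      have "A n = {\<omega>\<in>space M. pre t \<omega> = xs}" using True unfolding A_def n by auto
      moreover have "B n = {\<omega>\<in>space M. pre (Suc t) \<omega> = xs @ [y]}" using True unfolding B_def n
        by (auto simp: pre_Suc)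
      moreover have "last xs = x" using True hS by auto
      ultimately show ?thesis using cyl True by simp
    next
      case False
      then have "A n = {}" "B n = {}" unfolding A_def B_def n by auto
      then show ?thesis by simp
    qed
  next
    case False
    then have "A n = {}" "B n = {}" unfolding A_def B_def by auto
    then show ?thesis by simp
  qed
  have "(\<lambda>n. measure M (A n) * step x y) sums (measure M (\<Union>n. A n) * step x y)"
    by (rule sums_mult2[OF finite_measure_UNION[OF Am]])
  moreover have "(\<lambda>n. measure M (B n)) sums (measure M (\<Union>n. B n))"
    by (rule finite_measure_UNION[OF Bm])
  ultimately show ?thesis unfolding UA[symmetric] UB[symmetric] eq using sums_unique2 by blast
qed

end

context qbd begin

definition stay :: "nat \<Rightarrow> int \<Rightarrow> nat \<Rightarrow> 'w \<Rightarrow> bool" where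
  "stay t l N \<omega> \<longleftrightarrow> (\<forall>m. t < m \<and> m \<le> t + N \<longrightarrow> fst (X m \<omega>) = l)"

lemma fstX_meas[measurable]: "(\<lambda>\<omega>. fst (X m \<omega>)) \<in> measurable M (count_space UNIV)"
  by (rule measurable_compose[OF X_meas measurable_count_space])

lemma stay_pred[measurable]: "Measurable.pred M (stay t l N)"
  unfolding stay_def by measurable

lemma phase_split:
  assumes [measurable]: "Measurable.pred M P" and lv: "\<forall>\<omega>\<in>space M. P \<omega> \<longrightarrow> fst (X k \<omega>) = l"
  shows "measure M {\<omega>\<in>space M. P \<omega>} = (\<Sum>j\<in>UNIV. measure M {\<omega>\<in>space M. P \<omega> \<and> X k \<omega> = (l,j)})"
proof -
  have "{\<omega>\<in>space M. P \<omega>} = (\<Union>j\<in>UNIV. {\<omega>\<in>space M. P \<omega> \<and> X k \<omega> = (l,j)})"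
    using lv by (auto simp: prod_eq_iff)
  moreover have "measure M (\<Union>j\<in>UNIV. {\<omega>\<in>space M. P \<omega> \<and> X k \<omega> = (l,j)})
     = (\<Sum>j\<in>UNIV. measure M {\<omega>\<in>space M. P \<omega> \<and> X k \<omega> = (l,j)})"
    by (rule finite_measure_finite_Union) (auto simp: disjoint_family_on_def)
  ultimately show ?thesis by simp
qed

lemma stay_level:
  assumes hS: "\<forall>xs\<in>S. length xs = Suc t \<longrightarrow> last xs = (l,i)"
    and "pre t \<omega> \<in> S" "stay t l N \<omega>"
  shows "fst (X (t+N) \<omega>) = l"
proof (cases N)
  case 0
  then show ?thesis using hS assms(2) by (auto simp: last_pre[symmetric])
next
  case (Suc n)
  then show ?thesis using assms(3) by (auto simp: stay_def)
qed

lemma R'_from: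
  assumes hS: "\<forall>xs\<in>S. length xs = Suc t \<longrightarrow> last xs = (l,i)"
    and RN: "\<And>j. measure M {\<omega>\<in>space M. pre t \<omega> \<in> S \<and> stay t l N \<omega> \<and> X (t+N) \<omega> = (l,j)}
              = measure M {\<omega>\<in>space M. pre t \<omega> \<in> S} * mpow L0 N $i$j"
  shows "measure M {\<omega>\<in>space M. pre t \<omega> \<in> S \<and> stay t l N \<omega> \<and> X (Suc (t+N)) \<omega> = u}
       = measure M {\<omega>\<in>space M. pre t \<omega> \<in> S} * (\<Sum>j'\<in>UNIV. mpow L0 N $i$j' * step (l,j') u)"
proof -
  define S' where "S' j' = {xs. take (Suc t) xs \<in> S \<and> (\<forall>m. t<m \<and> m\<le>t+N \<longrightarrow> fst (xs!m) = l) \<and> last xs = (l,j')}" for j'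
  have eqS: "(pre (t+N) \<omega> \<in> S' j') \<longleftrightarrow> (pre t \<omega> \<in> S \<and> stay t l N \<omega> \<and> X (t+N) \<omega> = (l,j'))" for \<omega> j'
    unfolding S'_def stay_def by (simp add: take_pre pre_nth last_pre)
  have "measure M {\<omega>\<in>space M. pre t \<omega> \<in> S \<and> stay t l N \<omega> \<and> X (Suc (t+N)) \<omega> = u}
     = (\<Sum>j'\<in>UNIV. measure M {\<omega>\<in>space M. (pre t \<omega> \<in> S \<and> stay t l N \<omega> \<and> X (Suc (t+N)) \<omega> = u) \<and> X (t+N) \<omega> = (l,j')})"
    by (rule phase_split) (use stay_level[OF hS] in auto)
  also have "\<dots> = (\<Sum>j'\<in>UNIV. measure M {\<omega>\<in>space M. pre (t+N) \<omega> \<in> S' j' \<and> X (Suc (t+N)) \<omega> = u})"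
    by (intro sum.cong refl arg_cong[where f="measure M"]) (auto simp: eqS)
  also have "\<dots> = (\<Sum>j'\<in>UNIV. measure M {\<omega>\<in>space M. pre (t+N) \<omega> \<in> S' j'} * step (l,j') u)"
    by (intro sum.cong refl ML0) (auto simp: S'_def)
  also have "\<dots> = (\<Sum>j'\<in>UNIV. measure M {\<omega>\<in>space M. pre t \<omega> \<in> S} * mpow L0 N $i$j' * step (l,j') u)"
    by (intro sum.cong refl) (simp add: eqS RN)
  finally show ?thesis by (simp add: sum_distrib_left mult.assoc)
qed

lemma R_lemma:
  assumes hS: "\<forall>xs\<in>S. length xs = Suc t \<longrightarrow> last xs = (l,i)"
  shows "measure M {\<omega>\<in>space M. pre t \<omega> \<in> S \<and> stay t l N \<omega> \<and> X (t+N) \<omega> = (l,j)}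
              = measure M {\<omega>\<in>space M. pre t \<omega> \<in> S} * mpow L0 N $i$j"
proof (induction N arbitrary: j)
  case 0
  have "X t \<omega> = (l,i)" if "pre t \<omega> \<in> S" for \<omega> using hS that by (auto simp: last_pre[symmetric])
  then have "{\<omega>\<in>space M. pre t \<omega> \<in> S \<and> stay t l 0 \<omega> \<and> X (t+0) \<omega> = (l,j)}
     = (if j = i then {\<omega>\<in>space M. pre t \<omega> \<in> S} else {})"
    by (auto simp: stay_def)
  then show ?case by (simp add: mat_def)
next
  case (Suc N)
  have "{\<omega>\<in>space M. pre t \<omega> \<in> S \<and> stay t l (Suc N) \<omega> \<and> X (t + Suc N) \<omega> = (l,j)}
      = {\<omega>\<in>space M. pre t \<omega> \<in> S \<and> stay t l N \<omega> \<and> X (Suc (t+N)) \<omega> = (l,j)}"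
    by (auto simp: stay_def le_Suc_eq)
  moreover have "(\<Sum>j'\<in>UNIV. mpow L0 N $i$j' * step (l,j') (l,j)) = mpow L0 (Suc N) $i$j"
    by (simp add: qbd_step_def matrix_matrix_mult_def)
  ultimately show ?case using R'_from[OF hS Suc.IH, of "(l,j)"] by simp
qed

lemma R'_lemma:
  assumes hS: "\<forall>xs\<in>S. length xs = Suc t \<longrightarrow> last xs = (l,i)"
  shows "measure M {\<omega>\<in>space M. pre t \<omega> \<in> S \<and> stay t l N \<omega> \<and> X (Suc (t+N)) \<omega> = u}
       = measure M {\<omega>\<in>space M. pre t \<omega> \<in> S} * (\<Sum>j'\<in>UNIV. mpow L0 N $i$j' * step (l,j') u)"
  by (rule R'_from[OF hS R_lemma[OF hS]])

lemma stay_all: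
  assumes hS: "\<forall>xs\<in>S. length xs = Suc t \<longrightarrow> last xs = (l,i)"
  shows "measure M {\<omega>\<in>space M. pre t \<omega> \<in> S \<and> stay t l N \<omega>}
       = measure M {\<omega>\<in>space M. pre t \<omega> \<in> S} * (\<Sum>j\<in>UNIV. mpow L0 N $i$j)"
proof -
  have "measure M {\<omega>\<in>space M. pre t \<omega> \<in> S \<and> stay t l N \<omega>}
     = (\<Sum>j\<in>UNIV. measure M {\<omega>\<in>space M. (pre t \<omega> \<in> S \<and> stay t l N \<omega>) \<and> X (t+N) \<omega> = (l,j)})"
    by (rule phase_split) (use stay_level[OF hS] in auto)
  also have "\<dots> = (\<Sum>j\<in>UNIV. measure M {\<omega>\<in>space M. pre t \<omega> \<in> S} * mpow L0 N $i$j)"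
    using R_lemma[OF hS] by (simp add: conj_assoc)
  finally show ?thesis by (simp add: sum_distrib_left)
qed

lemma SM:
  assumes hS: "\<forall>xs\<in>S. length xs = Suc t \<longrightarrow> last xs = (l,i)"
    and summ: "\<And>i j. summable (\<lambda>n. mpow L0 n $i$j)"
    and w: "fst w \<noteq> l"
  shows "measure M {\<omega>\<in>space M. pre t \<omega> \<in> S \<and> (\<exists>N. stay t l N \<omega> \<and> X (Suc (t+N)) \<omega> = w)}
       = measure M {\<omega>\<in>space M. pre t \<omega> \<in> S} * (\<Sum>j'\<in>UNIV. nsum L0 $i$j' * step (l,j') w)"
proof -
  define F where "F N = {\<omega>\<in>space M. pre t \<omega> \<in> S \<and> stay t l N \<omega> \<and> X (Suc (t+N)) \<omega> = w}" for N
  have "F N \<in> sets M" for N unfolding F_def by measurable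
  moreover have "disjoint_family F"
  proof (unfold disjoint_family_on_def, intro ballI impI)
    fix N N' :: nat assume "N \<noteq> N'"
    show "F N \<inter> F N' = {}"
    proof (rule ccontr)
      assume "F N \<inter> F N' \<noteq> {}"
      then obtain \<omega> where "\<omega> \<in> F N" "\<omega> \<in> F N'" by auto
      then have a: "stay t l N \<omega>" "X (Suc (t+N)) \<omega> = w" "stay t l N' \<omega>" "X (Suc (t+N')) \<omega> = w"
        by (auto simp: F_def)
      show False
      proof (cases "N < N'")
        case True
        then show False using a(2,3) w by (auto simp: stay_def)
      next
        case False
        then have "N' < N" using \<open>N \<noteq> N'\<close> by simp
        then show False using a(1,4) w by (auto simp: stay_def)
      qed
    qed
  qed
  ultimately have s1: "(\<lambda>N. measure M (F N)) sums measure M (\<Union>N. F N)"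
    by (intro finite_measure_UNION) auto
  have U: "(\<Union>N. F N) = {\<omega>\<in>space M. pre t \<omega> \<in> S \<and> (\<exists>N. stay t l N \<omega> \<and> X (Suc (t+N)) \<omega> = w)}"
    unfolding F_def by auto
  have m: "measure M (F N) = measure M {\<omega>\<in>space M. pre t \<omega> \<in> S} * (\<Sum>j'\<in>UNIV. mpow L0 N $i$j' * step (l,j') w)" for N
    unfolding F_def by (rule R'_lemma[OF hS])
  have s2: "(\<lambda>N. measure M {\<omega>\<in>space M. pre t \<omega> \<in> S} * (\<Sum>j'\<in>UNIV. mpow L0 N $i$j' * step (l,j') w))
     sums (measure M {\<omega>\<in>space M. pre t \<omega> \<in> S} * (\<Sum>j'\<in>UNIV. nsum L0 $i$j' * step (l,j') w))"
    by (intro sums_mult sums_sum sums_mult2) (simp add: nsum_def summable_sums summ)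
  have "(\<lambda>N. measure M (F N)) sums (measure M {\<omega>\<in>space M. pre t \<omega> \<in> S} * (\<Sum>j'\<in>UNIV. nsum L0 $i$j' * step (l,j') w))"
    using s2 by (simp only: m)
  from sums_unique2[OF s1 this] U show ?thesis by simp
qed

end

definition good :: "(nat \<Rightarrow> int) \<Rightarrow> bool" where
  "good y \<longleftrightarrow> (\<forall>m. \<exists>n>m. y n \<noteq> y m)"

lemma tau_Suc:
  assumes "good y"
  shows "tau y k < tau y (Suc k)" "y (tau y (Suc k)) \<noteq> y (tau y k)"
    "\<And>n. tau y k < n \<Longrightarrow> n < tau y (Suc k) \<Longrightarrow> y n = y (tau y k)"
proof -
  have ex: "\<exists>n. tau y k < n \<and> y n \<noteq> y (tau y k)" using assms by (auto simp: good_def)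
  show "tau y k < tau y (Suc k)" "y (tau y (Suc k)) \<noteq> y (tau y k)"
    using LeastI_ex[OF ex] by auto
  show "y n = y (tau y k)" if "tau y k < n" "n < tau y (Suc k)" for n
    using not_less_Least[of n "\<lambda>n. tau y k < n \<and> y n \<noteq> y (tau y k)"] that by auto
qed

lemma tau_mono: assumes "good y" "j \<le> k" shows "tau y j \<le> tau y k"
  using assms(2)
proof (induction k)
  case 0 then show ?case by simp
next
  case (Suc k)
  then show ?case using tau_Suc(1)[OF assms(1), of k] by (auto simp: le_Suc_eq)
qed

lemma tau_agree:
  assumes "good y" "\<forall>m\<le>tau y k. y' m = y m" "j \<le> k"
  shows "tau y' j = tau y j"
  using assms(3)
proof (induction j)
  case 0 then show ?case by simp
next
  case (Suc j)
  have jk: "j \<le> k" using Suc by simp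
  have IH: "tau y' j = tau y j" using Suc jk by simp
  have le1: "tau y j \<le> tau y k" by (rule tau_mono[OF assms(1) jk])
  have le2: "tau y (Suc j) \<le> tau y k" by (rule tau_mono[OF assms(1) Suc.prems])
  note ts = tau_Suc[OF assms(1), of j]
  have "(LEAST n. tau y' j < n \<and> y' n \<noteq> y' (tau y' j)) = tau y (Suc j)"
  proof (rule Least_equality)
    show "tau y' j < tau y (Suc j) \<and> y' (tau y (Suc j)) \<noteq> y' (tau y' j)"
      using ts(1,2) IH le1 le2 assms(2) by auto
  next
    fix n assume n: "tau y' j < n \<and> y' n \<noteq> y' (tau y' j)"
    show "tau y (Suc j) \<le> n"
    proof (rule ccontr)
      assume "\<not> tau y (Suc j) \<le> n"
      then have "n < tau y (Suc j)" by simp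
      then have "y n = y (tau y j)" using ts(3) n IH by auto
      moreover have "y' n = y n" using \<open>n < tau y (Suc j)\<close> le2 assms(2) by auto
      ultimately show False using n IH le1 assms(2) by auto
    qed
  qed
  then show ?case by simp
qed

lemma tau_next:
  assumes "tau y k = t" "\<forall>m. t < m \<and> m \<le> t + N \<longrightarrow> y m = y t" "y (Suc (t+N)) \<noteq> y t"
  shows "tau y (Suc k) = Suc (t+N)"
proof -
  have "(LEAST n. t < n \<and> y n \<noteq> y t) = Suc (t+N)"
  proof (rule Least_equality)
    show "t < Suc (t + N) \<and> y (Suc (t + N)) \<noteq> y t" using assms(3) by simp
    fix n assume "t < n \<and> y n \<noteq> y t" then show "Suc (t+N) \<le> n"
      using assms(2) by (meson not_less_eq_eq)
  qed
  then show ?thesis using assms(1) by simp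
qed

locale main = gen_setup T Sp lam mu + qbd M X "Cm T Sp lam mu" "C0 T Sp lam mu" "Cp T Sp lam mu"
  for T :: "real^'s::finite^'s" and Sp lam mu and M :: "'w measure" and X
begin

definition ty :: "'w \<Rightarrow> nat \<Rightarrow> int" where "ty \<omega> = (\<lambda>m. fst (X m \<omega>))"

definition G where "G = {\<omega>\<in>space M. good (ty \<omega>)}"

lemma G_sets[measurable]: "G \<in> sets M"
  unfolding G_def good_def ty_def by measurable

lemma null_stay: "measure M {\<omega>\<in>space M. X m \<omega> = (l,i) \<and> (\<forall>n>m. fst (X n \<omega>) = fst (X m \<omega>))} = 0"
  (is "measure M ?N = 0")
proof -
  define S where "S = {xs :: (int \<times> 's) list. last xs = (l,i)}"
  have hS: "\<forall>xs\<in>S. length xs = Suc m \<longrightarrow> last xs = (l,i)" by (simp add: S_def)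
  have le: "measure M ?N \<le> rr ^ N" for N
  proof -
    have "?N \<subseteq> {\<omega>\<in>space M. pre m \<omega> \<in> S \<and> stay m l N \<omega>}"
      by (auto simp: S_def last_pre stay_def)
    then have "measure M ?N \<le> measure M {\<omega>\<in>space M. pre m \<omega> \<in> S \<and> stay m l N \<omega>}"
      by (intro finite_measure_mono) measurable
    also have "\<dots> = measure M {\<omega>\<in>space M. pre m \<omega> \<in> S} * (\<Sum>j\<in>UNIV. mpow A2 N $i$j)"
      by (rule stay_all[OF hS])
    also have "\<dots> \<le> 1 * rr ^ N"
      by (intro mult_mono mpow_rowsum[OF A2_nonneg rr_ge rr_nonneg])
         (auto intro!: sum_nonneg mpow_nonneg[OF A2_nonneg])
    finally show ?thesis by simp
  qed
  have "(\<lambda>N. rr ^ N) \<longlonglongrightarrow> 0" using rr_lt rr_nonneg by (intro LIMSEQ_power_zero) simp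
  then have "measure M ?N \<le> 0" by (rule LIMSEQ_le_const) (use le in auto)
  then show ?thesis using measure_nonneg[of M ?N] by linarith
qed

lemma AE_G: "AE \<omega> in M. good (ty \<omega>)"
proof -
  have *: "AE \<omega> in M. X m \<omega> = x \<longrightarrow> (\<exists>n>m. fst (X n \<omega>) \<noteq> fst (X m \<omega>))" for m x
  proof -
    obtain l i where x: "x = (l,i)" by (cases x)
    let ?N = "{\<omega>\<in>space M. X m \<omega> = (l,i) \<and> (\<forall>n>m. fst (X n \<omega>) = fst (X m \<omega>))}"
    have "?N \<in> sets M" by measurable
    then have "?N \<in> null_sets M" using null_stay[of m l i]
      by (simp add: null_sets_def emeasure_eq_measure)
    then show ?thesis by (rule AE_I') (auto simp: x)
  qed
  then have "\<forall>m. AE \<omega> in M. \<forall>x. X m \<omega> = x \<longrightarrow> (\<exists>n>m. fst (X n \<omega>) \<noteq> fst (X m \<omega>))"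
    by (intro allI, subst AE_all_countable) (intro allI *)
  then have "AE \<omega> in M. \<forall>m x. X m \<omega> = x \<longrightarrow> (\<exists>n>m. fst (X n \<omega>) \<noteq> fst (X m \<omega>))"
    by (subst AE_all_countable)
  then show ?thesis by eventually_elim (auto simp: good_def ty_def)
qed

lemma tau_meas[measurable]: "(\<lambda>\<omega>. tau (ty \<omega>) k) \<in> measurable M (count_space UNIV)"
proof (induction k)
  case 0 then show ?case by simp
next
  case (Suc k)
  have "(\<lambda>\<omega>. (\<lambda>t \<omega>. fst (X t \<omega>)) (tau (ty \<omega>) k) \<omega>) \<in> measurable M (count_space UNIV)"
    by (rule measurable_compose_countable[OF _ Suc]) simp
  then have [measurable]: "(\<lambda>\<omega>. fst (X (tau (ty \<omega>) k) \<omega>)) \<in> measurable M (count_space UNIV)" by simp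
  have "(\<lambda>\<omega>. LEAST n. tau (ty \<omega>) k < n \<and> fst (X n \<omega>) \<noteq> fst (X (tau (ty \<omega>) k) \<omega>)) \<in> measurable M (count_space UNIV)"
    using Suc by measurable
  then show ?case by (simp add: ty_def)
qed

end

context main begin

definition emb :: "int \<times> 's \<Rightarrow> real \<times> 's" where
  "emb x = (if snd x \<in> Sp then of_int (fst x) - 1/2 else of_int (fst x) + 1/2, snd x)"

lemma emb_inj: "emb x = emb y \<Longrightarrow> x = y"
  by (cases x; cases y) (auto simp: emb_def split: if_splits)

lemma emb_eq_iff[simp]: "emb x = emb y \<longleftrightarrow> x = y"
  using emb_inj by blast

lemma emb_cover:
  assumes "fst z = of_int a + 1/2" shows "\<exists>w. emb w = z"
proof (cases "snd z \<in> Sp")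
  case True
  then have "emb (a+1, snd z) = z" using assms by (auto simp: emb_def prod_eq_iff)
  then show ?thesis by blast
next
  case False
  then have "emb (a, snd z) = z" using assms by (auto simp: emb_def prod_eq_iff)
  then show ?thesis by blast
qed

lemma emb_fst: "\<exists>a. fst (emb x) = of_int a + 1/2"
proof (cases "snd x \<in> Sp")
  case True
  then have "fst (emb x) = of_int (fst x - 1) + 1/2" by (simp add: emb_def)
  then show ?thesis by blast
next
  case False
  then have "fst (emb x) = of_int (fst x) + 1/2" by (simp add: emb_def)
  then show ?thesis by blast
qed

definition Z :: "nat \<Rightarrow> 'w \<Rightarrow> real \<times> 's" where
  "Z k \<omega> = emb (X (tau (ty \<omega>) k) \<omega>)"

lemma Z_meas[measurable]: "Z k \<in> measurable M (count_space UNIV)"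
proof -
  have "(\<lambda>\<omega>. (\<lambda>t \<omega>. emb (X t \<omega>)) (tau (ty \<omega>) k) \<omega>) \<in> measurable M (count_space UNIV)"
    by (rule measurable_compose_countable[OF _ tau_meas]) simp
  then show ?thesis by (simp add: Z_def[abs_def])
qed

lemma G_full:
  assumes [measurable]: "Measurable.pred M Q"
  shows "measure M {\<omega>\<in>space M. \<omega> \<in> G \<and> Q \<omega>} = measure M {\<omega>\<in>space M. Q \<omega>}"
proof (rule finite_measure_eq_AE)
  show "AE x in M. (x \<in> {\<omega>\<in>space M. \<omega> \<in> G \<and> Q \<omega>}) = (x \<in> {\<omega>\<in>space M. Q \<omega>})"
    using AE_G by eventually_elim (auto simp: G_def)
qed measurable

lemma transfer:
  assumes "\<omega> \<in> G" "\<omega>' \<in> G" "pre t \<omega> = pre t \<omega>'" "tau (ty \<omega>') k = t" "j \<le> k"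
  shows "tau (ty \<omega>) j = tau (ty \<omega>') j" "Z j \<omega> = Z j \<omega>'"
proof -
  have Xeq: "X m \<omega> = X m \<omega>'" if "m \<le> t" for m
    using arg_cong[OF assms(3), of "\<lambda>xs. xs ! m"] that by (simp add: pre_nth)
  have g: "good (ty \<omega>')" using assms(2) by (simp add: G_def)
  show tj: "tau (ty \<omega>) j = tau (ty \<omega>') j"
    by (rule tau_agree[OF g _ assms(5)]) (use Xeq assms(4) in \<open>auto simp: ty_def\<close>)
  have "tau (ty \<omega>') j \<le> t" using tau_mono[OF g assms(5)] assms(4) by simp
  then show "Z j \<omega> = Z j \<omega>'" unfolding Z_def tj using Xeq by simp
qed

end

context main begin

lemma main_step:
  assumes zk: "zs k = emb (l,i)" and zk1: "zs (Suc k) = emb (l',j)"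
  defines "h \<equiv> (if l' = l then 0 else (\<Sum>j'\<in>UNIV. nsum A2 $i$j' * step (l,j') (l',j)))"
  shows "measure M {\<omega>\<in>space M. \<forall>i\<le>Suc k. Z i \<omega> = zs i}
       = measure M {\<omega>\<in>space M. \<forall>i\<le>k. Z i \<omega> = zs i} * h"
proof -
  define S where "S t = {xs. \<exists>\<omega>'\<in>G. pre t \<omega>' = xs \<and> tau (ty \<omega>') k = t \<and> (\<forall>i\<le>k. Z i \<omega>' = zs i)}" for t
  have hS: "\<forall>xs\<in>S t. length xs = Suc t \<longrightarrow> last xs = (l,i)" for t
  proof (intro ballI impI)
    fix xs assume "xs \<in> S t"
    then obtain \<omega>' where "pre t \<omega>' = xs" "tau (ty \<omega>') k = t" "Z k \<omega>' = zs k"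
      unfolding S_def by auto
    then show "last xs = (l,i)" using zk by (auto simp: Z_def last_pre)
  qed
  define Ak where "Ak t = {\<omega>\<in>space M. \<omega> \<in> G \<and> (\<forall>i\<le>k. Z i \<omega> = zs i) \<and> tau (ty \<omega>) k = t}" for t
  define A1 where "A1 t = {\<omega>\<in>space M. \<omega> \<in> G \<and> (\<forall>i\<le>Suc k. Z i \<omega> = zs i) \<and> tau (ty \<omega>) k = t}" for t
  have Ak_eq: "Ak t = {\<omega>\<in>space M. \<omega> \<in> G \<and> pre t \<omega> \<in> S t}" for t
  proof (intro set_eqI iffI)
    fix \<omega> assume "\<omega> \<in> Ak t" then show "\<omega> \<in> {\<omega>\<in>space M. \<omega> \<in> G \<and> pre t \<omega> \<in> S t}"
      unfolding Ak_def S_def by auto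
  next
    fix \<omega> assume a: "\<omega> \<in> {\<omega>\<in>space M. \<omega> \<in> G \<and> pre t \<omega> \<in> S t}"
    then obtain \<omega>' where o: "\<omega>' \<in> G" "pre t \<omega>' = pre t \<omega>" "tau (ty \<omega>') k = t" "\<forall>i\<le>k. Z i \<omega>' = zs i"
      unfolding S_def by auto
    have "tau (ty \<omega>) k = t" using transfer[of \<omega> \<omega>' t k k] a o by auto
    moreover have "Z i \<omega> = zs i" if "i \<le> k" for i using transfer[of \<omega> \<omega>' t k i] a o that by auto
    ultimately show "\<omega> \<in> Ak t" using a unfolding Ak_def by auto
  qed
  have Xt: "X t \<omega> = (l,i)" if "\<omega> \<in> Ak t" for \<omega> t
    using that zk unfolding Ak_def Z_def by auto
  have A1_eq: "A1 t = (if l' = l then {} else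
      {\<omega>\<in>space M. \<omega> \<in> G \<and> pre t \<omega> \<in> S t \<and> (\<exists>N. stay t l N \<omega> \<and> X (Suc (t+N)) \<omega> = (l',j))})" for t
  proof -
    have A1_Ak: "A1 t = {\<omega>\<in>Ak t. X (tau (ty \<omega>) (Suc k)) \<omega> = (l',j)}"
      unfolding A1_def Ak_def using zk1 by (auto simp: Z_def le_Suc_eq simp del: tau.simps)
    show ?thesis
    proof (cases "l' = l")
      case True
      have False if "\<omega> \<in> A1 t" for \<omega>
      proof -
        have w: "\<omega> \<in> Ak t" "X (tau (ty \<omega>) (Suc k)) \<omega> = (l',j)" using that A1_Ak by auto
        then have g: "good (ty \<omega>)" "tau (ty \<omega>) k = t" unfolding Ak_def G_def by auto
        show False using tau_Suc(2)[OF g(1), of k] w Xt[OF w(1)] g(2) True by (simp add: ty_def)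
      qed
      then show ?thesis using True by auto
    next
      case False
      have "\<omega> \<in> A1 t \<longleftrightarrow> \<omega> \<in> Ak t \<and> (\<exists>N. stay t l N \<omega> \<and> X (Suc (t+N)) \<omega> = (l',j))" for \<omega>
      proof (cases "\<omega> \<in> Ak t")
        case True
        have g: "good (ty \<omega>)" "tau (ty \<omega>) k = t" using True unfolding Ak_def G_def by auto
        note ts = tau_Suc[OF g(1), of k]
        have xt: "X t \<omega> = (l,i)" by (rule Xt[OF True])
        have "X (tau (ty \<omega>) (Suc k)) \<omega> = (l',j) \<longleftrightarrow> (\<exists>N. stay t l N \<omega> \<and> X (Suc (t+N)) \<omega> = (l',j))"
        proof
          assume a: "X (tau (ty \<omega>) (Suc k)) \<omega> = (l',j)"
          define N where "N = tau (ty \<omega>) (Suc k) - Suc t"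
          have n: "tau (ty \<omega>) (Suc k) = Suc (t+N)" using ts(1) g(2) by (simp add: N_def)
          have "stay t l N \<omega>" unfolding stay_def
          proof (intro allI impI)
            fix m assume "t < m \<and> m \<le> t + N"
            then have "ty \<omega> m = ty \<omega> (tau (ty \<omega>) k)" using ts(3)[of m] n g(2) by auto
            then show "fst (X m \<omega>) = l" using xt g(2) by (simp add: ty_def)
          qed
          then show "\<exists>N. stay t l N \<omega> \<and> X (Suc (t+N)) \<omega> = (l',j)" using a n by metis
        next
          assume "\<exists>N. stay t l N \<omega> \<and> X (Suc (t+N)) \<omega> = (l',j)"
          then obtain N where N: "stay t l N \<omega>" "X (Suc (t+N)) \<omega> = (l',j)" by blast
          have "tau (ty \<omega>) (Suc k) = Suc (t+N)"
            by (rule tau_next[OF g(2)]) (use N xt False in \<open>auto simp: stay_def ty_def\<close>)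
          then show "X (tau (ty \<omega>) (Suc k)) \<omega> = (l',j)" using N by simp
        qed
        then show ?thesis using True A1_Ak by auto
      next
        case False
        then show ?thesis using A1_Ak by auto
      qed
      then show ?thesis using False by (auto simp: Ak_eq)
    qed
  qed
  have summ: "\<And>i j. summable (\<lambda>n. mpow A2 n $i$j)"
    by (rule mpow_summable[OF A2_nonneg rr_ge rr_nonneg rr_lt])
  have mA1: "measure M (A1 t) = measure M (Ak t) * h" for t
  proof (cases "l' = l")
    case True then show ?thesis by (simp add: A1_eq h_def)
  next
    case False
    have "measure M (A1 t) = measure M {\<omega>\<in>space M. pre t \<omega> \<in> S t \<and> (\<exists>N. stay t l N \<omega> \<and> X (Suc (t+N)) \<omega> = (l',j))}"
      unfolding A1_eq using False by (simp add: G_full)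
    also have "\<dots> = measure M {\<omega>\<in>space M. pre t \<omega> \<in> S t} * (\<Sum>j'\<in>UNIV. nsum A2 $i$j' * step (l,j') (l',j))"
      by (rule SM[OF hS summ]) (use False in simp)
    also have "measure M {\<omega>\<in>space M. pre t \<omega> \<in> S t} = measure M (Ak t)"
      unfolding Ak_eq by (simp add: G_full)
    finally show ?thesis using False by (simp add: h_def)
  qed
  have Akm: "range Ak \<subseteq> sets M" "disjoint_family Ak"
    unfolding Ak_def disjoint_family_on_def by (auto, measurable)
  have A1m: "range A1 \<subseteq> sets M" "disjoint_family A1"
    unfolding A1_def disjoint_family_on_def by (auto, measurable)
  have UAk: "measure M (\<Union>t. Ak t) = measure M {\<omega>\<in>space M. \<forall>i\<le>k. Z i \<omega> = zs i}"
  proof -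
    have "(\<Union>t. Ak t) = {\<omega>\<in>space M. \<omega> \<in> G \<and> (\<forall>i\<le>k. Z i \<omega> = zs i)}" unfolding Ak_def by auto
    then show ?thesis by (simp add: G_full)
  qed
  have UA1: "measure M (\<Union>t. A1 t) = measure M {\<omega>\<in>space M. \<forall>i\<le>Suc k. Z i \<omega> = zs i}"
  proof -
    have "(\<Union>t. A1 t) = {\<omega>\<in>space M. \<omega> \<in> G \<and> (\<forall>i\<le>Suc k. Z i \<omega> = zs i)}" unfolding A1_def by auto
    then show ?thesis by (simp add: G_full)
  qed
  have "(\<lambda>t. measure M (Ak t) * h) sums (measure M (\<Union>t. Ak t) * h)"
    by (rule sums_mult2[OF finite_measure_UNION[OF Akm]])
  then have "(\<lambda>t. measure M (A1 t)) sums (measure M (\<Union>t. Ak t) * h)" by (simp add: mA1)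
  from sums_unique2[OF finite_measure_UNION[OF A1m] this] UAk UA1 show ?thesis by simp
qed

end

context main begin

abbreviation "K \<equiv> Kmat T Sp lam mu"

lemma h_eq:
  fixes l l' :: int
  assumes "l' \<noteq> l"
  shows "(\<Sum>j'\<in>UNIV. nsum A2 $i$j' * step (l,j') (l',j))
       = (if (l' = l-1 \<and> j \<notin> Sp) \<or> (l' = l+1 \<and> j \<in> Sp) then K $i$j else 0)"
proof -
  have st: "step (l,j') (l',j) = (if (l' = l-1 \<and> j \<notin> Sp) \<or> (l' = l+1 \<and> j \<in> Sp)
      then ((1/2) *\<^sub>R Bmat T Sp lam mu) $j'$j else 0)" for j'
    using assms by (cases "l' = l - 1"; cases "l' = l + 1") (auto simp: qbd_step_def Cm_def Cp_def Bmat_def)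
  show ?thesis
    by (simp add: st Kmat_eq matrix_matrix_mult_def if_distrib cong: if_cong)
qed

lemma dstep:
  "qbd_step (Dm K Sp) (D0 K Sp) (Dp K Sp) (emb (l,i)) (emb (l',j))
    = (if l' = l then 0 else if (l' = l-1 \<and> j \<notin> Sp) \<or> (l' = l+1 \<and> j \<in> Sp) then K $i$j else 0)"
  by (auto simp: qbd_step_def emb_def Dm_def D0_def Dp_def algebra_simps)

lemma dstep0:
  assumes "\<not> (\<exists>w. emb w = z)"
  shows "qbd_step (Dm K Sp) (D0 K Sp) (Dp K Sp) (emb x) z = 0"
proof -
  obtain a where a: "fst (emb x) = of_int a + 1/2" using emb_fst by blast
  have "fst z \<noteq> of_int b + 1/2" for b using emb_cover[of z b] assms by blast
  from this[of "a-1"] this[of a] this[of "a+1"] a show ?thesis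
    by (auto simp: qbd_step_def algebra_simps)
qed

lemma QBD_Z: "is_QBD M Z (Dm K Sp) (D0 K Sp) (Dp K Sp)"
  unfolding is_QBD_def
proof (intro conjI allI)
  fix n show "Z n \<in> measurable M (count_space UNIV)" by (rule Z_meas)
next
  fix k and zs :: "nat \<Rightarrow> real \<times> 's"
  show "measure M {\<omega>\<in>space M. \<forall>i\<le>Suc k. Z i \<omega> = zs i}
      = measure M {\<omega>\<in>space M. \<forall>i\<le>k. Z i \<omega> = zs i} * qbd_step (Dm K Sp) (D0 K Sp) (Dp K Sp) (zs k) (zs (Suc k))"
  proof (cases "\<exists>x. emb x = zs k")
    case False
    have ne: "Z k \<omega> \<noteq> zs k" for \<omega> unfolding Z_def using False by blast
    have e: "{\<omega>\<in>space M. \<forall>i\<le>k. Z i \<omega> = zs i} = {}" "{\<omega>\<in>space M. \<forall>i\<le>Suc k. Z i \<omega> = zs i} = {}"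
      using ne by (auto intro: le_SucI)
    show ?thesis unfolding e by simp
  next
    case True
    then obtain l i where x: "zs k = emb (l,i)" by (metis surj_pair)
    show ?thesis
    proof (cases "\<exists>w. emb w = zs (Suc k)")
      case False
      have ne: "Z (Suc k) \<omega> \<noteq> zs (Suc k)" for \<omega> unfolding Z_def using False by blast
      have e: "{\<omega>\<in>space M. \<forall>i\<le>Suc k. Z i \<omega> = zs i} = {}"
        using ne by auto
      have "qbd_step (Dm K Sp) (D0 K Sp) (Dp K Sp) (zs k) (zs (Suc k)) = 0"
        unfolding x by (rule dstep0[OF False])
      then show ?thesis unfolding e by simp
    next
      case True
      then obtain l' j where w: "zs (Suc k) = emb (l',j)" by (metis surj_pair)
      show ?thesis unfolding main_step[OF x w] unfolding x w dstep
        by (cases "l' = l") (simp_all add: h_eq)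
    qed
  qed
qed

end

theorem theorem6:
  fixes T :: "real^'s::finite^'s" and Sp :: "'s set" and lam mu :: real
    and M :: "'w measure" and Y :: "nat \<Rightarrow> 'w \<Rightarrow> int" and \<kappa> :: "nat \<Rightarrow> 'w \<Rightarrow> 's"
  assumes "generator T"
    and "Sp \<noteq> {}" and "Sp \<noteq> UNIV"
    and "lam > 0" and "mu > 0"
    and "\<forall>i. \<bar>T$i$i\<bar> \<le> lam" and "\<forall>i. \<bar>T$i$i\<bar> \<le> mu"
    and "prob_space M"
    and "is_QBD M (\<lambda>n \<omega>. (Y n \<omega>, \<kappa> n \<omega>)) (Cm T Sp lam mu) (C0 T Sp lam mu) (Cp T Sp lam mu)"
    and "AE \<omega> in M. Y 0 \<omega> = 1 \<and> \<kappa> 0 \<omega> \<in> Sp"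
  shows "invertible (mat 1 - (1/2) *\<^sub>R Amat T Sp lam mu)
    \<and> invertible (Xmat T Sp lam mu)
    \<and> Kmat T Sp lam mu = matrix_inv (Xmat T Sp lam mu) ** Ymat T Sp lam mu
    \<and> (AE \<omega> in M. \<forall>k. \<exists>n. tau (\<lambda>m. Y m \<omega>) k < n \<and> Y n \<omega> \<noteq> Y (tau (\<lambda>m. Y m \<omega>) k) \<omega>)
    \<and> is_QBD M (embedded Y \<kappa> Sp)
        (Dm (Kmat T Sp lam mu) Sp) (D0 (Kmat T Sp lam mu) Sp) (Dp (Kmat T Sp lam mu) Sp)"
proof -
  interpret m: main T Sp lam mu M "\<lambda>n \<omega>. (Y n \<omega>, \<kappa> n \<omega>)"
    by (intro main.intro gen_setup.intro qbd.intro qbd_axioms.intro) (use assms in auto)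
  have ty: "m.ty \<omega> = (\<lambda>m. Y m \<omega>)" for \<omega> by (simp add: m.ty_def)
  have AE: "AE \<omega> in M. \<forall>k. \<exists>n. tau (\<lambda>m. Y m \<omega>) k < n \<and> Y n \<omega> \<noteq> Y (tau (\<lambda>m. Y m \<omega>) k) \<omega>"
    using m.AE_G
  proof eventually_elim
    case (elim \<omega>)
    then show ?case using tau_Suc(1,2)[OF elim[unfolded ty]] by blast
  qed
  have Zeq: "m.Z = embedded Y \<kappa> Sp"
    by (simp add: fun_eq_iff m.Z_def embedded_def Let_def m.emb_def ty)
  show ?thesis using m.algebra_part AE m.QBD_Z unfolding Zeq by blast
qed


end
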